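(* Let $n$ be a positive even integer, let $g(t)=t^{n-1}$, and let $f(t)=\sum_{j=0}^d a_j t^j$ be a real polynomial, written as $f(t)=p(t^2)+t\,q(t^2)$ with $p,q$ real polynomials, such that the function $t\mapsto p(t^2)$ changes sign at most two times in $[-1,1]$. Consider the Abel equation $$x'(t)=f(t)x^3+g(t)x^2,\qquad t\in[-1,1].$$ If this equation has a center at $x=0$, then $$m_k=\int_{-1}^1 f(t)\,(G(t))^k\,dt=0\qquad\text{for all } k=0,1,2,3,4,\ldots,$$ where $G(t)=\int_{-1}^t g(s)\,ds=\frac{1}{n}(t^n-1)$.
   Context: The Abel equation $x'=f(t)x^3+g(t)x^2$ on $[-1,1]$ (with $x$ real) is said to have a center at $x=0$ if every solution $x(t)$ whose initial value $x(-1)$ is small enough in absolute value is defined on $[-1,1]$ and satisfies $x(-1)=x(1)$. *)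

theory Defs
  imports "HOL-Analysis.Analysis" "HOL-Computational_Algebra.Polynomial"
begin

definition abel_solution :: "(real \<Rightarrow> real) \<Rightarrow> (real \<Rightarrow> real) \<Rightarrow> (real \<Rightarrow> real) \<Rightarrow> bool" where
  "abel_solution f g x \<longleftrightarrow>
     (\<forall>t\<in>{-1..1}. (x has_real_derivative (f t * (x t)^3 + g t * (x t)^2)) (at t within {-1..1}))"

definition abel_center :: "(real \<Rightarrow> real) \<Rightarrow> (real \<Rightarrow> real) \<Rightarrow> bool" where
  "abel_center f g \<longleftrightarrow>
     (\<exists>\<delta>>0. \<forall>x0. \<bar>x0\<bar> < \<delta> \<longrightarrow>
        (\<exists>x. abel_solution f g x \<and> x (-1) = x0) \<and>
        (\<forall>x. abel_solution f g x \<and> x (-1) = x0 \<longrightarrow> x 1 = x0))"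

definition sign_changes_at_most :: "(real \<Rightarrow> real) \<Rightarrow> real set \<Rightarrow> nat \<Rightarrow> bool" where
  "sign_changes_at_most h S k \<longleftrightarrow>
     \<not> (\<exists>s :: nat \<Rightarrow> real. (\<forall>i\<le>k+1. s i \<in> S) \<and>
           (\<forall>i\<le>k. s i < s (Suc i) \<and> h (s i) * h (s (Suc i)) < 0))"

end

theory Submission
  imports Defs
begin


lemma no_alt:
  assumes "sign_changes_at_most (\<lambda>t. poly p (t^2)) {-1..1} 2"
    and "0 \<le> u" "u < v" "v < w" "w \<le> 1"
    and "poly p (u^2) * poly p (v^2) < 0" "poly p (v^2) * poly p (w^2) < 0"
  shows False
proof -
  define s where "s = (\<lambda>i::nat. [-w,-v,u,v] ! i)"
  have "\<forall>i\<le>2+1. s i \<in> {-1..1}"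
  proof (intro allI impI)
    fix i :: nat assume "i \<le> 2+1"
    then have "i = 0 \<or> i = 1 \<or> i = 2 \<or> i = 3" by auto
    then show "s i \<in> {-1..1}" using assms by (auto simp: s_def)
  qed
  moreover have "\<forall>i\<le>2. s i < s (Suc i) \<and> poly p ((s i)^2) * poly p ((s (Suc i))^2) < 0"
  proof (intro allI impI)
    fix i :: nat assume "i \<le> 2"
    then have "i = 0 \<or> i = 1 \<or> i = 2" by auto
    then show "s i < s (Suc i) \<and> poly p ((s i)^2) * poly p ((s (Suc i))^2) < 0"
      using assms by (auto simp: s_def numeral_2_eq_2 mult.commute)
  qed
  ultimately show False using assms(1) unfolding sign_changes_at_most_def by blast
qed

lemma core_B:
  fixes h :: "real \<Rightarrow> real"
  assumes noalt: "\<And>u v w. 0 \<le> u \<Longrightarrow> u < v \<Longrightarrow> v < w \<Longrightarrow> w \<le> 1 \<Longrightarrow> h u * h v < 0 \<Longrightarrow> h v * h w < 0 \<Longrightarrow> False"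
    and ab: "0 \<le> a" "a < b" "b \<le> 1" "h a > 0" "h b < 0"
  shows "\<exists>c\<in>{0..1}. \<forall>t\<in>{0..1}. (t < c \<longrightarrow> h t \<ge> 0) \<and> (c < t \<longrightarrow> h t \<le> 0)"
proof -
  define S where "S = {t\<in>{0..1}. h t > 0}"
  have aS: "a \<in> S" using ab by (auto simp: S_def)
  have bdd: "bdd_above S" by (auto simp: S_def bdd_above_def)
  define c where "c = Sup S"
  have ac: "a \<le> c" using aS bdd c_def cSup_upper by blast
  have c1: "c \<le> 1" unfolding c_def using aS by (intro cSup_least) (auto simp: S_def)
  show ?thesis
  proof (intro bexI[of _ c] ballI conjI impI)
    show "c \<in> {0..1}" using ac c1 ab by auto
  next
    fix t assume t: "t \<in> {0..1}" "c < t"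
    show "h t \<le> 0"
    proof (rule ccontr)
      assume "\<not> h t \<le> 0"
      then have "t \<in> S" using t by (auto simp: S_def)
      then have "t \<le> c" using bdd c_def cSup_upper by blast
      then show False using t by simp
    qed
  next
    fix t assume t: "t \<in> {0..1}" "t < c"
    then obtain s where s: "s \<in> S" "t < s" using less_cSup_iff[of S t] aS bdd c_def by auto
    show "h t \<ge> 0"
    proof (rule ccontr)
      assume ht: "\<not> h t \<ge> 0"
      have hs: "h s > 0" "s \<le> 1" using s by (auto simp: S_def)
      show False
      proof (cases "b > s")
        case True
        show False
          by (rule noalt[of t s b]) (use t s True hs ht ab in \<open>auto simp: mult_neg_pos mult_pos_neg\<close>)
      next
        case False
        then have "b < s" using hs ab by (cases "b = s") auto
        show False
          by (rule noalt[of a b s]) (use \<open>b < s\<close> hs ab in \<open>auto simp: mult_neg_pos mult_pos_neg\<close>)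
      qed
    qed
  qed
qed

lemma sign_C:
  fixes p :: "real poly"
  assumes h: "\<forall>t\<in>{0..1}. (t < c \<longrightarrow> \<sigma> * poly p (t^2) \<ge> 0) \<and> (c < t \<longrightarrow> \<sigma> * poly p (t^2) \<le> 0)"
    and c: "c \<in> {0..1}" and n: "even n" "n > 0"
  shows "\<forall>t\<in>{-1..1}. (-\<sigma>) * poly p (t^2) * (t^n - c^n) \<ge> 0"
proof
  fix t :: real assume t: "t \<in> {-1..1}"
  define u where "u = \<bar>t\<bar>"
  have u: "u \<in> {0..1}" using t by (auto simp: u_def)
  have e1: "t^2 = u^2" by (simp add: u_def)
  have e2: "t^n = u^n" using n by (simp add: u_def power_even_abs)
  consider "u < c" | "u = c" | "c < u" by linarith
  then show "(-\<sigma>) * poly p (t^2) * (t^n - c^n) \<ge> 0"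
  proof cases
    case 1
    then have "u^n < c^n" using u n by (intro power_strict_mono) auto
    moreover have "\<sigma> * poly p (u^2) \<ge> 0" using h u 1 by auto
    ultimately have "\<sigma> * poly p (u^2) * (u^n - c^n) \<le> 0" using mult_nonneg_nonpos[of "\<sigma> * poly p (u^2)" "u^n - c^n"] by linarith
    then show ?thesis unfolding e1 e2 by simp
  next
    case 2 then show ?thesis unfolding e1 e2 by simp
  next
    case 3
    then have "c^n < u^n" using c n by (intro power_strict_mono) auto
    moreover have "\<sigma> * poly p (u^2) \<le> 0" using h u 3 by auto
    ultimately have "\<sigma> * poly p (u^2) * (u^n - c^n) \<le> 0" using mult_nonpos_nonneg[of "\<sigma> * poly p (u^2)" "u^n - c^n"] by linarith
    then show ?thesis unfolding e1 e2 by simp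
  qed
qed

lemma sign_D:
  fixes p :: "real poly"
  assumes sc: "sign_changes_at_most (\<lambda>t. poly p (t^2)) {-1..1} 2"
    and n: "even n" "n > 0"
  shows "\<exists>c\<in>{0..1}. \<exists>\<sigma>. \<sigma> \<noteq> 0 \<and> (\<forall>t\<in>{-1..1}. \<sigma> * poly p (t^2) * (t^n - c^n) \<ge> 0)"
proof (cases "\<forall>t\<in>{0..1}. poly p (t^2) \<ge> 0")
  case True
  have "\<forall>t\<in>{0..1}. (t < 0 \<longrightarrow> (-1) * poly p (t^2) \<ge> 0) \<and> (0 < t \<longrightarrow> (-1) * poly p (t^2) \<le> 0)"
    using True by auto
  from sign_C[OF this _ n] show ?thesis by (intro bexI[of _ 0] exI[of _ 1]) auto
next
  case F1: False
  show ?thesis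
  proof (cases "\<forall>t\<in>{0..1}. poly p (t^2) \<le> 0")
    case True
    have "\<forall>t\<in>{0..1}. (t < 0 \<longrightarrow> 1 * poly p (t^2) \<ge> 0) \<and> (0 < t \<longrightarrow> 1 * poly p (t^2) \<le> 0)"
      using True by auto
    from sign_C[OF this _ n] show ?thesis by (intro bexI[of _ 0] exI[of _ "-1"]) auto
  next
    case False
    from F1 obtain a where a: "a \<in> {0..1}" "poly p (a^2) < 0" by (auto simp: not_le)
    from False obtain b where b: "b \<in> {0..1}" "poly p (b^2) > 0" by (auto simp: not_le)
    have "a \<noteq> b" using a b by auto
    then consider "b < a" | "a < b" by linarith
    then show ?thesis
    proof cases
      case 1
      have "\<exists>c\<in>{0..1}. \<forall>t\<in>{0..1}. (t < c \<longrightarrow> (\<lambda>t. 1 * poly p (t^2)) t \<ge> 0) \<and> (c < t \<longrightarrow> (\<lambda>t. 1 * poly p (t^2)) t \<le> 0)"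
        by (rule core_B[of _ b a]) (use no_alt[OF sc] a b 1 in auto)
      then obtain c where "c \<in> {0..1}" "\<forall>t\<in>{0..1}. (t < c \<longrightarrow> 1 * poly p (t^2) \<ge> 0) \<and> (c < t \<longrightarrow> 1 * poly p (t^2) \<le> 0)"
        by auto
      from sign_C[OF this(2) this(1) n] \<open>c \<in> _\<close> show ?thesis
        by (intro bexI[of _ c] exI[of _ "-1"]) auto
    next
      case 2
      have "\<exists>c\<in>{0..1}. \<forall>t\<in>{0..1}. (t < c \<longrightarrow> (\<lambda>t. (-1) * poly p (t^2)) t \<ge> 0) \<and> (c < t \<longrightarrow> (\<lambda>t. (-1) * poly p (t^2)) t \<le> 0)"
        by (rule core_B[of _ a b]) (use no_alt[OF sc] a b 2 in auto)
      then obtain c where "c \<in> {0..1}" "\<forall>t\<in>{0..1}. (t < c \<longrightarrow> (-1) * poly p (t^2) \<ge> 0) \<and> (c < t \<longrightarrow> (-1) * poly p (t^2) \<le> 0)"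
        by auto
      from sign_C[OF this(2) this(1) n] \<open>c \<in> _\<close> show ?thesis
        by (intro bexI[of _ c] exI[of _ "1"]) auto
    qed
  qed
qed

lemma odd_int:
  fixes \<phi> :: "real \<Rightarrow> real"
  assumes "\<And>t. \<phi> (-t) = - \<phi> t"
  shows "integral {-1..1} \<phi> = 0"
proof -
  have "integral {-1..1} (\<lambda>x. \<phi> (-x)) = integral {-1..1} \<phi>"
    using Henstock_Kurzweil_Integration.integral_reflect_real[of 1 "-1" \<phi>] by simp
  moreover have "integral {-1..1} (\<lambda>x. \<phi> (-x)) = - integral {-1..1} \<phi>"
    using assms by simp
  ultimately show ?thesis by simp
qed

lemma p_zero:
  fixes n :: nat and f p q :: "real poly"
  assumes n: "n > 0" "even n"
    and fpq: "\<forall>t. poly f t = poly p (t^2) + t * poly q (t^2)"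
    and sc: "sign_changes_at_most (\<lambda>t. poly p (t^2)) {-1..1} 2"
    and I0: "integral {-1..1} (poly f) = 0"
    and I1: "integral {-1..1} (\<lambda>t. poly f t * ((t^n - 1) / n)) = 0"
  shows "p = 0"
proof -
  obtain c \<sigma> where c: "c \<in> {0..1}" "\<sigma> \<noteq> 0"
    and sg: "\<forall>t\<in>{-1..1}. \<sigma> * poly p (t^2) * (t^n - c^n) \<ge> 0"
    using sign_D[OF sc n(2,1)] by blast
  have cf: "continuous_on {-1..1} (poly f)" by (intro continuous_intros)
  have h0: "(poly f has_integral 0) {-1..1}"
    using I0 integrable_continuous_interval[OF cf] by (metis has_integral_integrable_integral)
  have cf1: "continuous_on {-1..1} (\<lambda>t. poly f t * ((t^n - 1) / n))" using n by (intro continuous_intros) auto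
  have h1: "((\<lambda>t. poly f t * ((t^n - 1) / n)) has_integral 0) {-1..1}"
    using I1 integrable_continuous_interval[OF cf1] by (metis has_integral_integrable_integral)
  have "((\<lambda>t. real n * (poly f t * ((t^n - 1) / n)) + (1 - c^n) * poly f t) has_integral 0) {-1..1}"
    using has_integral_add[OF has_integral_mult_right[OF h1, of "real n"] has_integral_mult_right[OF h0, of "1 - c^n"]]
    by simp
  moreover have "\<And>t. real n * (poly f t * ((t^n - 1) / n)) + (1 - c^n) * poly f t = poly f t * (t^n - c^n)"
    using n by (simp add: field_simps)
  ultimately have hF: "((\<lambda>t. poly f t * (t^n - c^n)) has_integral 0) {-1..1}" by simp
  have oddpart: "integral {-1..1} (\<lambda>t. t * poly q (t^2) * (t^n - c^n)) = 0"
    by (rule odd_int) (use n in simp)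
  have co: "continuous_on {-1..1} (\<lambda>t. t * poly q (t^2) * (t^n - c^n))" by (intro continuous_intros)
  have ho: "((\<lambda>t. t * poly q (t^2) * (t^n - c^n)) has_integral 0) {-1..1}"
    using oddpart integrable_continuous_interval[OF co] by (metis has_integral_integrable_integral)
  have "((\<lambda>t. \<sigma> * (poly f t * (t^n - c^n) - t * poly q (t^2) * (t^n - c^n))) has_integral 0) {-1..1}"
    using has_integral_mult_right[OF has_integral_diff[OF hF ho], of \<sigma>] by simp
  moreover have "\<And>t. \<sigma> * (poly f t * (t^n - c^n) - t * poly q (t^2) * (t^n - c^n)) = \<sigma> * poly p (t^2) * (t^n - c^n)"
    using fpq by (simp add: algebra_simps)
  ultimately have hP: "((\<lambda>t. \<sigma> * poly p (t^2) * (t^n - c^n)) has_integral 0) (cbox (-1) 1)" by simp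
  have zero: "\<sigma> * poly p (t^2) * (t^n - c^n) = 0" if "t \<in> {-1..1}" for t
  proof (rule has_integral_0_cbox_imp_0[OF _ _ hP])
    show "continuous_on (cbox (-1) 1) (\<lambda>t. \<sigma> * poly p (t^2) * (t^n - c^n))" by (intro continuous_intros)
    show "\<And>x. x \<in> box (- 1) 1 \<Longrightarrow> 0 \<le> \<sigma> * poly p (x^2) * (x^n - c^n)" using sg by auto
    show "box (-1) (1::real) \<noteq> {}" by auto
    show "t \<in> cbox (-1) 1" using that by auto
  qed
  have roots: "{0..1} - {c^2} \<subseteq> {x. poly p x = 0}"
  proof
    fix s assume s: "s \<in> {0..1} - {c^2}"
    define t where "t = sqrt s"
    have t: "t \<in> {-1..1}" "t^2 = s" "0 \<le> t" using s by (auto simp: t_def intro: order_trans[OF _ real_sqrt_ge_zero])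
    have "t \<noteq> c" using s t by auto
    then have "t^n \<noteq> c^n" using power_eq_iff_eq_base[of n t c] n c t by auto
    then have "poly p (t^2) = 0" using zero[OF t(1)] c by simp
    then show "s \<in> {x. poly p x = 0}" using t by simp
  qed
  have "infinite ({0..1::real} - {c^2})" by (intro Diff_infinite_finite) auto
  then have "infinite {x. poly p x = 0}" using roots finite_subset by blast
  then show "p = 0" using poly_roots_finite by blast
qed



lemma mvt_bound:
  fixes y y' :: "real \<Rightarrow> real"
  assumes d: "\<And>t. t \<in> {-1..1} \<Longrightarrow> (y has_real_derivative y' t) (at t within {-1..1})"
    and a: "-1 \<le> a" "a \<le> 1"
    and L: "\<And>t. t \<in> {-1..a} \<Longrightarrow> \<bar>y' t\<bar> \<le> L"
  shows "\<bar>y a - y (-1)\<bar> \<le> 2 * L"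
proof -
  have "norm (y a - y (-1)) \<le> L * norm (a - (-1))"
  proof (rule field_differentiable_bound[of "{-1..a}" y y'])
    show "convex {-1..a}" by simp
    show "(y has_field_derivative y' z) (at z within {-1..a})" if "z \<in> {-1..a}" for z
      using has_field_derivative_subset[OF d[of z]] that a by auto
    show "norm (y' z) \<le> L" if "z \<in> {-1..a}" for z using L that by simp
  qed (use a in auto)
  moreover have "0 \<le> L" using L[of "-1"] a by auto
  ultimately show ?thesis using a mult_left_mono[of "a+1" 2 L] by simp
qed

lemma small_zero:
  fixes A K \<eta> :: real
  assumes "\<eta> > 0" "K \<ge> 0" "\<And>x. 0 < x \<Longrightarrow> x \<le> \<eta> \<Longrightarrow> \<bar>A\<bar> \<le> K * x"
  shows "A = 0"
proof (rule ccontr)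
  assume A: "A \<noteq> 0"
  define x where "x = min \<eta> (\<bar>A\<bar> / (2*K+1))"
  have x: "0 < x" "x \<le> \<eta>" using A assms by (auto simp: x_def)
  have "K * x \<le> K * (\<bar>A\<bar> / (2*K+1))" using assms by (intro mult_left_mono) (auto simp: x_def)
  also have "\<dots> < \<bar>A\<bar>" using A assms by (simp add: field_simps add_pos_nonneg)
  finally show False using assms(3)[OF x] by simp
qed

lemma deriv_test:
  fixes x :: "real \<Rightarrow> real"
  assumes "(x has_real_derivative D) (at t within S)" "x t \<noteq> 0" "n > 0"
  shows "((\<lambda>t. 1 / x t + t^n / n) has_real_derivative (- D / (x t)^2 + t^(n-1))) (at t within S)"
  using assms
  by (auto intro!: derivative_eq_intros simp: field_simps power2_eq_square)



lemma Dbound: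
  fixes a b y x0 M :: real
  assumes "\<bar>a\<bar> \<le> M" "\<bar>b\<bar> \<le> 1" "\<bar>y\<bar> \<le> 2*x0" "0 < x0" "x0 \<le> 1"
  shows "\<bar>a*y^3 + b*y^2\<bar> \<le> (8*M+4)*x0^2"
proof -
  have M0: "0 \<le> M" using assms(1) by linarith
  have y3: "\<bar>y\<bar>^3 \<le> (2*x0)^3" by (rule power_mono) (use assms in auto)
  have y2: "\<bar>y\<bar>^2 \<le> (2*x0)^2" by (rule power_mono) (use assms in auto)
  have "\<bar>a*y^3\<bar> \<le> M * (2*x0)^3" unfolding abs_mult power_abs
    by (rule mult_mono) (use assms y3 in auto)
  also have "\<dots> = 8*M*x0^3" by (simp add: power_mult_distrib)
  also have "\<dots> \<le> 8*M*x0^2" using M0 assms power_decreasing[of 2 3 x0] by (intro mult_left_mono) auto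
  finally have 1: "\<bar>a*y^3\<bar> \<le> 8*M*x0^2" .
  have "\<bar>b*y^2\<bar> \<le> 1 * (2*x0)^2" unfolding abs_mult power_abs
    by (rule mult_mono) (use assms y2 in auto)
  then have 2: "\<bar>b*y^2\<bar> \<le> 4*x0^2" by (simp add: power_mult_distrib)
  show ?thesis using 1 2 by (simp add: algebra_simps)
qed

lemma sol_est:
  fixes f :: "real poly" and x :: "real \<Rightarrow> real" and n :: nat
  assumes n: "n > 0" "even n"
    and M: "\<forall>t\<in>{-1..1}. \<bar>poly f t\<bar> \<le> M" "M \<ge> 1"
    and sol: "abel_solution (poly f) (\<lambda>t. t^(n-1)) x" "x (-1) = x0" "x 1 = x0"
    and x0: "0 < x0" "2*(2*(8*M+4)) * x0 \<le> 1"
  shows "\<bar>x0 * integral {-1..1} (poly f) + x0^2 * integral {-1..1} (\<lambda>t. poly f t * ((t^n - 1) / n))\<bar>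
           \<le> 4*M*(8*M+3*(2*(8*M+4)))*x0^3"
proof -
  define C1 where "C1 = 2*(8*M+4)"
  define C2 where "C2 = 8*M + 3*C1"
  have C1x: "C1 * x0 \<le> 1/2" using x0(2) unfolding C1_def by (simp add: algebra_simps)
  have C1pos: "C1 \<ge> 24" using M by (simp add: C1_def)
  have x01: "x0 \<le> 1" using mult_right_mono[of 24 C1 x0] C1x C1pos x0 by linarith
  define D where "D t = poly f t * (x t)^3 + t^(n-1) * (x t)^2" for t
  have d: "\<And>t. t \<in> {-1..1} \<Longrightarrow> (x has_real_derivative D t) (at t within {-1..1})"
    using sol(1) by (simp add: abel_solution_def D_def)
  have cont: "continuous_on {-1..1} x" by (rule DERIV_continuous_on) (rule d)
  have tp: "\<bar>t^(n-1)\<bar> \<le> 1" if "t \<in> {-1..1}" for t :: real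
    using that power_le_one[of "\<bar>t\<bar>" "n-1"] by (simp add: power_abs abs_le_iff)
  have Db: "\<bar>D t\<bar> \<le> (8*M+4)*x0^2" if "t \<in> {-1..1}" "\<bar>x t\<bar> \<le> 2*x0" for t
    unfolding D_def by (rule Dbound) (use that M tp x0 x01 in auto)
  have b2: "\<bar>x t\<bar> \<le> 2*x0" if t: "t \<in> {-1..1}" for t
  proof (rule ccontr)
    assume "\<not> \<bar>x t\<bar> \<le> 2*x0"
    define T where "T = {-1..1} \<inter> (\<lambda>t. \<bar>x t\<bar>) -` {2*x0..}"
    have tT: "t \<in> T" using t \<open>\<not> _\<close> by (auto simp: T_def)
    have clT: "closed T" unfolding T_def
      by (rule continuous_closed_preimage) (auto intro: continuous_intros cont)
    have bT: "bdd_below T" by (auto simp: T_def bdd_below_def)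
    define t1 where "t1 = Inf T"
    have t1T: "t1 \<in> T" unfolding t1_def using closed_contains_Inf[OF _ bT clT] tT by blast
    have t1r: "-1 \<le> t1" "t1 \<le> 1" using t1T by (auto simp: T_def)
    have below: "\<bar>x s\<bar> < 2*x0" if "s \<in> {-1..1}" "s < t1" for s
    proof (rule ccontr)
      assume "\<not> \<bar>x s\<bar> < 2*x0"
      then have "s \<in> T" using that by (auto simp: T_def)
      then have "t1 \<le> s" unfolding t1_def using bT by (rule cInf_lower)
      then show False using that by simp
    qed
    have "\<exists>t2\<ge>-1. t2 \<le> t1 \<and> \<bar>x t2\<bar> = 2*x0"
    proof (rule IVT')
      show "\<bar>x (-1)\<bar> \<le> 2*x0" using sol x0 by simp
      show "2*x0 \<le> \<bar>x t1\<bar>" using t1T by (auto simp: T_def)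
      show "-1 \<le> t1" by (rule t1r)
      show "continuous_on {-1..t1} (\<lambda>t. \<bar>x t\<bar>)"
        by (intro continuous_intros continuous_on_subset[OF cont]) (use t1r in auto)
    qed
    then obtain t2 where t2: "-1 \<le> t2" "t2 \<le> t1" "\<bar>x t2\<bar> = 2*x0" by blast
    have "t2 = t1" using below[of t2] t2 t1r by force
    then have xt1: "\<bar>x t1\<bar> = 2*x0" using t2 by simp
    have "\<bar>x t1 - x (-1)\<bar> \<le> 2 * ((8*M+4)*x0^2)"
    proof (rule mvt_bound[OF d t1r])
      fix s assume s: "s \<in> {-1..t1}"
      show "\<bar>D s\<bar> \<le> (8*M+4)*x0^2"
      proof (rule Db)
        show "s \<in> {-1..1}" using s t1r by auto
        show "\<bar>x s\<bar> \<le> 2*x0" using s below[of s] xt1 t1r by (cases "s = t1") auto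
      qed
    qed auto
    then have "\<bar>x t1 - x0\<bar> \<le> C1 * x0 * x0" using sol by (simp add: C1_def power2_eq_square algebra_simps)
    also have "\<dots> \<le> 1/2 * x0" using C1x x0 by (intro mult_right_mono) auto
    finally show False using xt1 x0 by linarith
  qed
  have b1: "\<bar>x t - x0\<bar> \<le> C1 * x0^2" if t: "t \<in> {-1..1}" for t
  proof -
    have "\<bar>x t - x (-1)\<bar> \<le> 2 * ((8*M+4)*x0^2)"
      by (rule mvt_bound[OF d]) (use t in \<open>auto intro!: Db b2\<close>)
    then show ?thesis using sol by (simp add: C1_def algebra_simps)
  qed
  have xpos: "x t > 0" if "t \<in> {-1..1}" for t
  proof -
    have "C1 * x0^2 \<le> 1/2 * x0" using C1x x0 by (simp add: power2_eq_square mult.assoc[symmetric] mult_right_mono)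
    then show ?thesis using b1[OF that] x0 by linarith
  qed
  define r where "r t = x t - x0 - (t^n - 1) / n * x0^2" for t
  have dr: "(r has_real_derivative (D t - t^(n-1) * x0^2)) (at t within {-1..1})" if "t \<in> {-1..1}" for t
    unfolding r_def using d[OF that] n
    by (auto intro!: derivative_eq_intros simp: field_simps)
  have rb: "\<bar>r t\<bar> \<le> 2 * (C2 * x0^3)" if t: "t \<in> {-1..1}" for t
  proof -
    have "\<bar>r t - r (-1)\<bar> \<le> 2 * (C2 * x0^3)"
    proof (rule mvt_bound[OF dr])
      fix s assume s: "s \<in> {-1..t}"
      then have s1: "s \<in> {-1..1}" using t by auto
      have "D s - s^(n-1) * x0^2 = poly f s * (x s)^3 + s^(n-1) * ((x s - x0) * (x s + x0))"
        by (simp add: D_def algebra_simps power2_eq_square)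
      also have "\<bar>\<dots>\<bar> \<le> M * (2*x0)^3 + 1 * (C1 * x0^2 * (3*x0))"
      proof (rule order_trans[OF abs_triangle_ineq], rule add_mono)
        have "\<bar>x s\<bar>^3 \<le> (2*x0)^3" by (rule power_mono) (use b2[OF s1] in auto)
        then show "\<bar>poly f s * (x s)^3\<bar> \<le> M * (2*x0)^3" unfolding abs_mult power_abs
          by (intro mult_mono) (use M s1 in auto)
        have "\<bar>x s + x0\<bar> \<le> 3*x0" using b2[OF s1] x0 by linarith
        then have hh: "\<bar>(x s - x0) * (x s + x0)\<bar> \<le> C1 * x0^2 * (3*x0)" unfolding abs_mult
          by (intro mult_mono) (use b1[OF s1] x0 in auto)
        show "\<bar>s^(n-1) * ((x s - x0) * (x s + x0))\<bar> \<le> 1 * (C1 * x0^2 * (3*x0))"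
          unfolding abs_mult[of "s^(n-1)"] by (rule mult_mono[OF tp[OF s1] hh]) auto
      qed
      also have "\<dots> = C2 * x0^3" by (simp add: C2_def power_mult_distrib algebra_simps power2_eq_square power3_eq_cube)
      finally show "\<bar>D s - s^(n-1) * x0^2\<bar> \<le> C2 * x0^3" .
    qed (use t in auto)
    moreover have "r (-1) = 0" using sol n by (simp add: r_def)
    ultimately show ?thesis by simp
  qed
  have dphi: "((\<lambda>t. 1 / x t + t^n / n) has_vector_derivative (- (poly f t * x t))) (at t within {-1..1})"
    if "t \<in> {-1..1}" for t
  proof -
    have "((\<lambda>t. 1 / x t + t^n / n) has_real_derivative (- D t / (x t)^2 + t^(n-1))) (at t within {-1..1})"
      by (rule deriv_test[OF d[OF that]]) (use xpos[OF that] n in auto)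
    moreover have "- D t / (x t)^2 + t^(n-1) = - (poly f t * x t)"
      using xpos[OF that] by (simp add: D_def field_simps power2_eq_square power3_eq_cube)
    ultimately show ?thesis by (simp add: has_real_derivative_iff_has_vector_derivative)
  qed
  have "((\<lambda>t. - (poly f t * x t)) has_integral ((1 / x 1 + 1^n / n) - (1 / x (-1) + (-1)^n / n))) {-1..1}"
    by (rule fundamental_theorem_of_calculus) (auto intro: dphi)
  then have hx: "((\<lambda>t. poly f t * x t) has_integral 0) {-1..1}"
    using sol n has_integral_neg[of "\<lambda>t. - (poly f t * x t)" 0 "{-1..1}"] by simp
  define I0 where "I0 = integral {-1..1} (poly f)"
  define I1 where "I1 = integral {-1..1} (\<lambda>t. poly f t * ((t^n - 1) / n))"
  have h0: "(poly f has_integral I0) {-1..1}" unfolding I0_def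
    by (rule integrable_integral, rule integrable_continuous_interval) (intro continuous_intros)
  have h1: "((\<lambda>t. poly f t * ((t^n - 1) / n)) has_integral I1) {-1..1}" unfolding I1_def
    by (rule integrable_integral, rule integrable_continuous_interval) (use n in \<open>intro continuous_intros; auto\<close>)
  have "((\<lambda>t. poly f t * x t - x0 * poly f t - x0^2 * (poly f t * ((t^n - 1) / n))) has_integral (0 - x0 * I0 - x0^2 * I1)) {-1..1}"
    by (intro has_integral_diff hx has_integral_mult_right h0 h1)
  moreover have "\<And>t. poly f t * x t - x0 * poly f t - x0^2 * (poly f t * ((t^n - 1) / n)) = poly f t * r t"
    by (simp add: r_def algebra_simps)
  ultimately have hr: "((\<lambda>t. poly f t * r t) has_integral (- (x0 * I0 + x0^2 * I1))) (cbox (-1) 1)" by simp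
  have "norm (- (x0 * I0 + x0^2 * I1)) \<le> (M * (2 * (C2 * x0^3))) * Henstock_Kurzweil_Integration.content (cbox (-1) (1::real))"
  proof (rule has_integral_bound[OF _ hr])
    show "0 \<le> M * (2 * (C2 * x0^3))" using M x0 by (simp add: C2_def C1_def)
    fix t :: real assume "t \<in> cbox (-1) 1"
    then have t: "t \<in> {-1..1}" by simp
    show "norm (poly f t * r t) \<le> M * (2 * (C2 * x0^3))" unfolding real_norm_def abs_mult
      by (rule mult_mono) (use M t rb[OF t] in auto)
  qed
  then show ?thesis by (simp add: I0_def I1_def C2_def C1_def algebra_simps)
qed



theorem theorem2:
  fixes n :: nat and f p q :: "real poly"
  assumes "n > 0" and "even n"
    and "\<forall>t. poly f t = poly p (t^2) + t * poly q (t^2)"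
    and "sign_changes_at_most (\<lambda>t. poly p (t^2)) {-1..1} 2"
    and "abel_center (poly f) (\<lambda>t. t ^ (n - 1))"
  shows "\<forall>k::nat. integral {-1..1} (\<lambda>t. poly f t * (integral {-1..t} (\<lambda>s. s ^ (n - 1))) ^ k) = 0"
proof -
  note n = assms(1,2)
  obtain \<delta> where \<delta>: "\<delta> > 0" and cen: "\<And>x0. \<bar>x0\<bar> < \<delta> \<Longrightarrow>
        (\<exists>x. abel_solution (poly f) (\<lambda>t. t ^ (n - 1)) x \<and> x (-1) = x0) \<and>
        (\<forall>x. abel_solution (poly f) (\<lambda>t. t ^ (n - 1)) x \<and> x (-1) = x0 \<longrightarrow> x 1 = x0)"
    using assms(5) unfolding abel_center_def by blast
  have "bounded (poly f ` {-1..1})"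
    by (intro compact_imp_bounded compact_continuous_image) (auto intro: continuous_intros)
  then obtain B where B: "\<forall>t\<in>{-1..1}. \<bar>poly f t\<bar> \<le> B" unfolding bounded_iff by auto
  define M where "M = max B 1"
  have M: "\<forall>t\<in>{-1..1}. \<bar>poly f t\<bar> \<le> M" "M \<ge> 1" using B by (auto simp: M_def intro: order_trans)
  define \<eta> where "\<eta> = min (\<delta>/2) (1 / (2*(2*(8*M+4))))"
  have \<eta>: "\<eta> > 0" using \<delta> M by (simp add: \<eta>_def)
  have \<eta>1: "\<eta> \<le> 1"
  proof -
    have "1 / (2*(2*(8*M+4))) \<le> 1" using M by (simp add: field_simps)
    then show ?thesis unfolding \<eta>_def by linarith
  qed
  define K where "K = 4*M*(8*M+3*(2*(8*M+4)))"
  have K0: "K \<ge> 0" using M by (simp add: K_def)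
  define I0 where "I0 = integral {-1..1} (poly f)"
  define I1 where "I1 = integral {-1..1} (\<lambda>t. poly f t * ((t^n - 1) / n))"
  have est: "\<bar>x0 * I0 + x0^2 * I1\<bar> \<le> K * x0^3" if x0: "0 < x0" "x0 \<le> \<eta>" for x0
  proof -
    have "\<bar>x0\<bar> < \<delta>" using x0 \<delta> by (simp add: \<eta>_def)
    from cen[OF this] obtain x where x: "abel_solution (poly f) (\<lambda>t. t ^ (n - 1)) x" "x (-1) = x0" "x 1 = x0"
      by blast
    have "2*(2*(8*M+4)) * x0 \<le> 1"
    proof -
      have "x0 \<le> 1 / (2*(2*(8*M+4)))" using x0 by (simp add: \<eta>_def)
      then show ?thesis using M by (simp add: field_simps)
    qed
    from sol_est[OF n M x x0(1) this] show ?thesis by (simp add: I0_def I1_def K_def)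
  qed
  have "I0 = 0"
  proof (rule small_zero[OF \<eta>, of "K + \<bar>I1\<bar>"])
    show "0 \<le> K + \<bar>I1\<bar>" using K0 by simp
    fix x0 assume x0: "0 < x0" "x0 \<le> \<eta>"
    have e1: "\<bar>x0 * I0 + x0^2 * I1\<bar> = x0 * \<bar>I0 + x0 * I1\<bar>"
    proof -
      have "x0 * I0 + x0^2 * I1 = x0 * (I0 + x0 * I1)" by (simp add: power2_eq_square algebra_simps)
      then show ?thesis using x0 by (simp add: abs_mult)
    qed
    have e2: "K * x0^3 = x0 * (K * x0^2)" by (simp add: power2_eq_square power3_eq_cube)
    have "x0 * \<bar>I0 + x0 * I1\<bar> \<le> x0 * (K * x0^2)"
      using est[OF x0] unfolding e1 e2 .
    then have a: "\<bar>I0 + x0 * I1\<bar> \<le> K * x0^2" using x0 by simp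
    have "K * x0^2 \<le> K * x0" using K0 x0 \<eta>1 by (intro mult_left_mono) (auto simp: power2_eq_square)
    moreover have "\<bar>x0 * I1\<bar> = \<bar>I1\<bar> * x0" using x0 by (simp add: abs_mult)
    ultimately show "\<bar>I0\<bar> \<le> (K + \<bar>I1\<bar>) * x0" using a by (simp add: algebra_simps)
  qed
  have "I1 = 0"
  proof (rule small_zero[OF \<eta> K0])
    fix x0 assume x0: "0 < x0" "x0 \<le> \<eta>"
    have e1: "\<bar>x0 * I0 + x0^2 * I1\<bar> = x0^2 * \<bar>I1\<bar>" using \<open>I0 = 0\<close> by (simp add: abs_mult)
    have e2: "K * x0^3 = x0^2 * (K * x0)" by (simp add: power2_eq_square power3_eq_cube)
    have "x0^2 * \<bar>I1\<bar> \<le> x0^2 * (K * x0)"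
      using est[OF x0] unfolding e1 e2 .
    then show "\<bar>I1\<bar> \<le> K * x0" using x0 by simp
  qed
  have p0: "p = 0" by (rule p_zero[OF n assms(3,4)]) (use \<open>I0 = 0\<close> \<open>I1 = 0\<close> in \<open>simp_all add: I0_def I1_def\<close>)
  have Gi: "integral {-1..t} (\<lambda>s. s ^ (n - 1)) = (t^n - 1) / n" if "t \<in> {-1..1}" for t :: real
  proof -
    have "((\<lambda>s. s ^ (n - 1)) has_integral (t^n / n - (-1)^n / n)) {-1..t}"
    proof (rule fundamental_theorem_of_calculus)
      show "-1 \<le> t" using that by simp
      fix s :: real
      have "((\<lambda>s. s^n / n) has_real_derivative s^(n-1)) (at s within {-1..t})"
        using n by (auto intro!: derivative_eq_intros simp: field_simps)
      then show "((\<lambda>s. s^n / n) has_vector_derivative s^(n-1)) (at s within {-1..t})"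
        by (simp add: has_real_derivative_iff_has_vector_derivative)
    qed
    then show ?thesis using n by (simp add: integral_unique diff_divide_distrib)
  qed
  show ?thesis
  proof
    fix k :: nat
    have "integral {-1..1} (\<lambda>t. poly f t * (integral {-1..t} (\<lambda>s. s ^ (n - 1))) ^ k)
        = integral {-1..1} (\<lambda>t. t * poly q (t^2) * ((t^n - 1) / n) ^ k)"
      by (rule integral_cong) (use Gi assms(3) p0 in simp)
    also have "\<dots> = 0" by (rule odd_int) (use n in simp)
    finally show "integral {-1..1} (\<lambda>t. poly f t * (integral {-1..t} (\<lambda>s. s ^ (n - 1))) ^ k) = 0" .
  qed
qed

end
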